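(* Let $n\ge1$ and $\pi\in\mathfrak{R}_n$, and write $\Psi_{FZ}(\pi)=(M,w)$ with $M=m_1\cdots m_{2n}$ and $w=w_1\cdots w_{2n}$. Then: - $M$ is a Dyck path, i.e. all its steps are $U$ or $D$; - $(M,w)^{rc}=(M,w)$; - $\Psi(\pi):=(m_1\cdots m_n,\,w_1\cdots w_n)$ lies in $\mathcal{P}_n$. Moreover, the map $\Psi:\mathfrak{R}_n\to\mathcal{P}_n$ is a bijection.
   Context: A permutation $\pi\in\mathfrak{S}_{2n}$ is alternating if $\pi_1>\pi_2<\pi_3>\cdots$. It is rc-invariant if $\pi_{2n+1-i}=2n+1-\pi_i$ for all $i$. Let $\mathfrak{R}_n$ be the set of rc-invariant alternating permutations of $[2n]$. Paths and heights. A two-colored Motzkin path of length $N$ is a word $M=m_1\cdots m_N$ over $\{U,D,H,\tilde H\}$. Here $U=(1,1)$, $D=(1,-1)$, and $H,\tilde H$ are colored copies of $(1,0)$. The path starts at $(0,0)$, stays weakly above the $x$-axis, and ends on it. The height of step $i$ is $h_i(M)=|\{j<i:m_j=U\}|-|\{j<i:m_j=D\}|$. The same definition of height applies to any path. Laguerre histories. A restricted Laguerre history of length $N$ is a pair $(M,w)$, with $w\in\mathbb{N}^N$, such that $0\le w_i\le h_i(M)$ if $m_i\in\{U,H\}$ and $0\le w_i\le h_i(M)-1$ if $m_i\in\{D,\tilde H\}$. Foata–Zeilberger map. For $\pi\in\mathfrak{S}_N$ set $\pi_0=0$, $\pi_{N+1}=+\infty$. For $i\in[N]$ with $\pi_j=i$: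 - $m_i=U$ if $\pi_{j-1}>\pi_j<\pi_{j+1}$; - $m_i=D$ if $\pi_{j-1}<\pi_j>\pi_{j+1}$; - $m_i=H$ if $\pi_{j-1}<\pi_j<\pi_{j+1}$; - $m_i=\tilde H$ if $\pi_{j-1}>\pi_j>\pi_{j+1}$. Also $w_i=|\{k:k<j,\ \pi_k<\pi_j=i<\pi_{k-1}\}|$. Set $\Psi_{FZ}(\pi)=(M,w)$. The rc operation. For a history $(M,w)$ of length $N$, define $(M,w)^{rc}=(M',w')$ by: - $m'_{N+1-i}=m_i$ for $m_i\in\{H,\tilde H\}$, $m'_{N+1-i}=U$ if $m_i=D$, and $m'_{N+1-i}=D$ if $m_i=U$; - $w'_{N+1-i}=h_i(M)-w_i$ if $m_i\in\{U,H\}$, and $w'_{N+1-i}=h_i(M)-1-w_i$ if $m_i\in\{D,\tilde H\}$. Labeled ballot paths. A ballot path of length $n$ is a word $P=p_1\cdots p_n$ over $\{U,D\}$ whose path from $(0,0)$ never goes below the $x$-axis; it may end at any height. A labeled ballot path of length $n$ is a pair $(P,w)$ with $P$ a ballot path of length $n$ and $w\in\mathbb{N}^n$ such that $0\le w_i\le h_i(P)$ if $p_i=U$ and $0\le w_i\le h_i(P)-1$ if $p_i=D$. Let $\mathcal{P}_n$ be the set of labeled ballot paths of length $n$. *)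

theory Defs
  imports "HOL-Combinatorics.Permutations"
begin

text \<open>Permutations of [N] are functions nat => nat with p permutes {1..N};
  positions and values are 1-based.\<close>

definition alternating :: "nat \<Rightarrow> (nat \<Rightarrow> nat) \<Rightarrow> bool" where
  "alternating N p \<longleftrightarrow>
     (\<forall>i\<in>{1..<N}. (odd i \<longrightarrow> p i > p (Suc i)) \<and> (even i \<longrightarrow> p i < p (Suc i)))"

definition rc_invariant :: "nat \<Rightarrow> (nat \<Rightarrow> nat) \<Rightarrow> bool" where
  "rc_invariant N p \<longleftrightarrow> (\<forall>i\<in>{1..N}. p (N + 1 - i) = N + 1 - p i)"

definition RcAlt :: "nat \<Rightarrow> (nat \<Rightarrow> nat) set" where
  "RcAlt n = {p. p permutes {1..2*n} \<and> alternating (2*n) p \<and> rc_invariant (2*n) p}"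

datatype step = U | D | H | Ht

definition height :: "step list \<Rightarrow> nat \<Rightarrow> int" where
  "height M i = int (length (filter (\<lambda>s. s = U) (take (i - 1) M)))
              - int (length (filter (\<lambda>s. s = D) (take (i - 1) M)))"

text \<open>Extended permutation: pi_0 = 0 and pi_(N+1) = +infinity, represented by N+1
  (which exceeds every value of a permutation of [N]).\<close>
definition ext :: "nat \<Rightarrow> (nat \<Rightarrow> nat) \<Rightarrow> nat \<Rightarrow> nat" where
  "ext N p j = (if j = 0 then 0 else if j = N + 1 then N + 1 else p j)"

definition fz_step :: "nat \<Rightarrow> (nat \<Rightarrow> nat) \<Rightarrow> nat \<Rightarrow> step" where
  "fz_step N p i = (let j = inv_into {1..N} p i;
                        a = ext N p (j - 1); b = ext N p j; c = ext N p (j + 1) in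
     if a > b \<and> b < c then U
     else if a < b \<and> b > c then D
     else if a < b \<and> b < c then H
     else Ht)"

definition fz_weight :: "nat \<Rightarrow> (nat \<Rightarrow> nat) \<Rightarrow> nat \<Rightarrow> nat" where
  "fz_weight N p i = (let j = inv_into {1..N} p i in
     card {k \<in> {1..<j}. ext N p k < i \<and> i < ext N p (k - 1)})"

definition PsiFZ :: "nat \<Rightarrow> (nat \<Rightarrow> nat) \<Rightarrow> step list \<times> nat list" where
  "PsiFZ N p = (map (fz_step N p) [1..<N+1], map (fz_weight N p) [1..<N+1])"

fun flip :: "step \<Rightarrow> step" where
  "flip U = D" | "flip D = U" | "flip H = H" | "flip Ht = Ht"

definition rc :: "step list \<times> nat list \<Rightarrow> step list \<times> nat list" where
  "rc Mw = (let M = fst Mw; w = snd Mw; N = length M in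
     (rev (map flip M),
      rev (map (\<lambda>i. if M ! (i - 1) \<in> {U, H}
                     then nat (height M i - int (w ! (i - 1)))
                     else nat (height M i - 1 - int (w ! (i - 1)))) [1..<N+1])))"

definition ballot_path :: "step list \<Rightarrow> bool" where
  "ballot_path P \<longleftrightarrow> set P \<subseteq> {U, D} \<and> (\<forall>i\<in>{1..length P + 1}. height P i \<ge> 0)"

definition LBP :: "nat \<Rightarrow> (step list \<times> nat list) set" where
  "LBP n = {(P, w). length P = n \<and> length w = n \<and> ballot_path P \<and>
     (\<forall>i\<in>{1..n}. (P ! (i - 1) = U \<longrightarrow> int (w ! (i - 1)) \<le> height P i) \<and>
                  (P ! (i - 1) = D \<longrightarrow> int (w ! (i - 1)) \<le> height P i - 1))}"

definition Psi :: "nat \<Rightarrow> (nat \<Rightarrow> nat) \<Rightarrow> step list \<times> nat list" where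
  "Psi n p = (take n (fst (PsiFZ (2*n) p)), take n (snd (PsiFZ (2*n) p)))"

end

theory Submission
  imports Defs
begin


type_synonym st = "(nat option \<times> nat) list"

definition nn :: "st \<Rightarrow> nat" where
  "nn S = length (filter (\<lambda>x. fst x = None) S)"

lemma nn_simps[simp]: "nn [] = 0" "nn (x#xs) = (if fst x = None then Suc (nn xs) else nn xs)"
  "nn (xs @ ys) = nn xs + nn ys"
  by (auto simp: nn_def)

fun insN :: "nat \<Rightarrow> (nat option \<times> nat) \<Rightarrow> st \<Rightarrow> st" where
  "insN w x [] = [x]"
| "insN w x (y#ys) = (if fst y = None then (if w = 0 then x#y#ys else y # insN (w-1) x ys)
                      else y # insN w x ys)"

fun closeN :: "nat \<Rightarrow> nat \<Rightarrow> st \<Rightarrow> st" where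
  "closeN w t [] = []"
| "closeN w t (y#ys) = (if fst y = None then (if w = 0 then (Some t, snd y)#ys else y # closeN (w-1) t ys)
                      else y # closeN w t ys)"

definition stepf :: "step \<Rightarrow> nat \<Rightarrow> nat \<Rightarrow> st \<Rightarrow> st" where
  "stepf s w t S = (if s = U then insN w (None, t) S else closeN w t S)"

lemma insN_split: "nn X = w \<Longrightarrow> (Y = [] \<or> fst (hd Y) = None) \<Longrightarrow> insN w x (X @ Y) = X @ x # Y"
proof (induction X arbitrary: w)
  case Nil
  then show ?case by (cases Y) auto
next
  case (Cons a X)
  then show ?case by (cases "fst a = None") auto
qed

lemma closeN_split: "nn X = w \<Longrightarrow> closeN w t (X @ (None, b) # Y) = X @ (Some t, b) # Y"
proof (induction X arbitrary: w)
  case Nil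
  then show ?case by auto
next
  case (Cons a X)
  then show ?case by (cases "fst a = None") auto
qed

lemma decompU: "w \<le> nn S \<Longrightarrow> \<exists>X Y. S = X @ Y \<and> nn X = w \<and> (Y = [] \<or> fst (hd Y) = None)"
proof (induction S arbitrary: w)
  case Nil
  then show ?case by auto
next
  case (Cons a S)
  show ?case
  proof (cases "fst a = None")
    case True
    show ?thesis
    proof (cases w)
      case 0
      then show ?thesis using True by (intro exI[of _ "[]"] exI[of _ "a#S"]) auto
    next
      case (Suc v)
      then have "v \<le> nn S" using Cons.prems True by simp
      then obtain X Y where "S = X @ Y" "nn X = v" "Y = [] \<or> fst (hd Y) = None"
        using Cons.IH[of v] by blast
      then show ?thesis using True Suc by (intro exI[of _ "a#X"] exI[of _ Y]) auto
    qed
  next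
    case False
    have "w \<le> nn S" using Cons.prems False by simp
    then obtain X Y where "S = X @ Y" "nn X = w" "Y = [] \<or> fst (hd Y) = None"
      using Cons.IH[of w] by blast
    then show ?thesis using False by (intro exI[of _ "a#X"] exI[of _ Y]) auto
  qed
qed

lemma decompD: "w < nn S \<Longrightarrow> \<exists>X b Y. S = X @ (None, b) # Y \<and> nn X = w"
proof (induction S arbitrary: w)
  case Nil
  then show ?case by auto
next
  case (Cons a S)
  show ?case
  proof (cases "fst a = None")
    case True
    show ?thesis
    proof (cases w)
      case 0
      then show ?thesis using True by (intro exI[of _ "[]"] exI[of _ "snd a"] exI[of _ S])
          (cases a, auto)
    next
      case (Suc v)
      then have "v < nn S" using Cons.prems True by simp
      then obtain X b Y where "S = X @ (None, b) # Y" "nn X = v"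
        using Cons.IH[of v] by blast
      then show ?thesis using True Suc by (intro exI[of _ "a#X"] exI[of _ b] exI[of _ Y]) auto
    qed
  next
    case False
    have "w < nn S" using Cons.prems False by simp
    then obtain X b Y where "S = X @ (None, b) # Y" "nn X = w"
      using Cons.IH[of w] by blast
    then show ?thesis using False by (intro exI[of _ "a#X"] exI[of _ b] exI[of _ Y]) auto
  qed
qed

lemma insN_gen: "\<exists>X Y. S = X @ Y \<and> insN w x S = X @ x # Y"
proof (induction S arbitrary: w)
  case Nil
  then show ?case by auto
next
  case (Cons a S)
  show ?case
  proof (cases "fst a = None \<and> w = 0")
    case True
    then show ?thesis by (intro exI[of _ "[]"] exI[of _ "a#S"]) auto
  next
    case False
    then obtain X Y where "S = X @ Y" "insN (if fst a = None then w - 1 else w) x S = X @ x # Y"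
      using Cons.IH by blast
    then show ?thesis using False by (intro exI[of _ "a#X"] exI[of _ Y]) (auto split: if_splits)
  qed
qed

lemma closeN_gen: "closeN w t S = S \<or> (\<exists>X b Y. S = X @ (None, b) # Y \<and> closeN w t S = X @ (Some t, b) # Y)"
proof (induction S arbitrary: w)
  case Nil
  then show ?case by auto
next
  case (Cons a S)
  show ?case
  proof (cases "fst a = None \<and> w = 0")
    case True
    then show ?thesis by (intro disjI2 exI[of _ "[]"] exI[of _ "snd a"] exI[of _ S]) (cases a, auto)
  next
    case False
    from Cons.IH[of "if fst a = None then w - 1 else w"] show ?thesis
    proof
      assume "closeN (if fst a = None then w - 1 else w) t S = S"
      then show ?thesis using False by (auto split: if_splits)
    next
      assume "\<exists>X b Y. S = X @ (None, b) # Y \<and> closeN (if fst a = None then w - 1 else w) t S = X @ (Some t, b) # Y"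
      then obtain X b Y where "S = X @ (None, b) # Y" "closeN (if fst a = None then w - 1 else w) t S = X @ (Some t, b) # Y"
        by blast
      then show ?thesis using False by (intro disjI2 exI[of _ "a#X"] exI[of _ b] exI[of _ Y]) auto
    qed
  qed
qed

lemma split_unique: "X @ x # Y = X' @ x' # Y' \<Longrightarrow> P x \<Longrightarrow> P x' \<Longrightarrow> \<forall>z\<in>set X. \<not> P z \<Longrightarrow> \<forall>z\<in>set X'. \<not> P z \<Longrightarrow> X = X'"
proof (induction X arbitrary: X')
  case Nil
  then show ?case by (cases X') auto
next
  case (Cons a X)
  then show ?case by (cases X') auto
qed



definition shape :: "nat \<Rightarrow> (nat \<times> nat) list \<Rightarrow> st" where
  "shape t ps = map (\<lambda>(a,b). (if a < t then Some a else None, b)) (filter (\<lambda>(a,b). b < t) ps)"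

fun vals :: "(nat \<times> nat) list \<Rightarrow> nat list" where
  "vals [] = []" | "vals ((a,b)#ps) = a # b # vals ps"

lemma vals_append[simp]: "vals (xs @ ys) = vals xs @ vals ys"
  by (induction xs rule: vals.induct) auto

lemma set_vals: "set (vals ps) = fst ` set ps \<union> snd ` set ps"
  by (induction ps rule: vals.induct) auto

lemma length_vals[simp]: "length (vals ps) = 2 * length ps"
  by (induction ps rule: vals.induct) auto

definition good :: "nat \<Rightarrow> (nat \<times> nat) list \<Rightarrow> bool" where
  "good N ps \<longleftrightarrow> successively (\<lambda>x y. snd x < fst y) ps \<and> (\<forall>x\<in>set ps. snd x < fst x)
     \<and> distinct (vals ps) \<and> set (vals ps) = {1..N}"

definition cnt :: "nat \<Rightarrow> (nat \<times> nat) list \<Rightarrow> nat" where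
  "cnt t xs = length (filter (\<lambda>(a,b). b < t \<and> t < a) xs)"

definition wgt :: "(nat \<times> nat) list \<Rightarrow> nat \<Rightarrow> nat" where
  "wgt ps t = cnt t (takeWhile (\<lambda>(a,b). a \<noteq> t \<and> b \<noteq> t) ps)"

lemma cnt_rev[simp]: "cnt t (rev xs) = cnt t xs"
  by (simp add: cnt_def rev_filter[symmetric])

lemma shape_simps[simp]: "shape t [] = []" "shape t (xs @ ys) = shape t xs @ shape t ys"
  "shape t ((a,b) # ys) = (if b < t then (if a < t then Some a else None, b) # shape t ys else shape t ys)"
  by (auto simp: shape_def)

lemma shape_Suc: "t \<notin> set (vals xs) \<Longrightarrow> shape (Suc t) xs = shape t xs"
  by (induction xs rule: vals.induct) auto

lemma nn_shape: "t \<notin> set (vals xs) \<Longrightarrow> nn (shape t xs) = cnt t xs"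
  by (induction xs rule: vals.induct) (auto simp: cnt_def)

lemma chain: "successively (\<lambda>x y. snd x < fst y) (p # ys) \<Longrightarrow> t \<le> snd p \<Longrightarrow>
   shape t ys = [] \<or> fst (hd (shape t ys)) = None"
proof (induction ys arbitrary: p)
  case Nil
  then show ?case by simp
next
  case (Cons y ys)
  obtain a b where y: "y = (a,b)" by force
  have "snd p < a" using Cons.prems y by simp
  show ?case
  proof (cases "b < t")
    case True
    then show ?thesis using y \<open>snd p < a\<close> Cons.prems by auto
  next
    case False
    have "successively (\<lambda>x y. snd x < fst y) (y # ys)" using Cons.prems by simp
    then show ?thesis using Cons.IH[of y] False y by auto
  qed
qed

lemma good_decomp:
  assumes "good N ps" "t \<in> {1..N}"
  obtains xs a b ys where "ps = xs @ (a,b) # ys" "t = a \<or> t = b" "t \<notin> set (vals xs)" "t \<notin> set (vals ys)"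
proof -
  have "t \<in> set (vals ps)" using assms unfolding good_def by auto
  then obtain p where p: "p \<in> set ps" "t = fst p \<or> t = snd p" unfolding set_vals by auto
  then obtain xs ys where ps: "ps = xs @ p # ys" by (meson split_list)
  obtain a b where ab: "p = (a,b)" by force
  have "distinct (vals ps)" using assms unfolding good_def by auto
  then have "t \<notin> set (vals xs)" "t \<notin> set (vals ys)" using p ps ab by auto
  then show ?thesis using that ps ab p by auto
qed

lemma wgt_decomp: "t \<notin> set (vals xs) \<Longrightarrow> t = a \<or> t = b \<Longrightarrow> wgt (xs @ (a,b) # ys) t = cnt t xs"
proof -
  assume "t \<notin> set (vals xs)" "t = a \<or> t = b"
  moreover have "\<And>x. x \<in> set xs \<Longrightarrow> (\<lambda>(a,b). a \<noteq> t \<and> b \<noteq> t) x" using calculation(1)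
    by (force simp: set_vals)
  ultimately show ?thesis unfolding wgt_def by (auto simp: takeWhile_append2)
qed

lemma key:
  assumes g: "good N ps" and t: "t \<in> {1..N}"
  shows "shape (Suc t) ps = stepf (if t \<in> snd ` set ps then U else D) (wgt ps t) t (shape t ps)
    \<and> nn (shape t ps) = wgt ps t + (if t \<in> snd ` set ps then 0 else 1) + wgt (rev ps) t
    \<and> nn (shape (Suc t) ps) = (if t \<in> snd ` set ps then Suc (nn (shape t ps)) else nn (shape t ps) - 1)"
proof -
  obtain xs a b ys where ps: "ps = xs @ (a,b) # ys" and tab: "t = a \<or> t = b"
    and nx: "t \<notin> set (vals xs)" and ny: "t \<notin> set (vals ys)"
    using good_decomp[OF g t] by blast
  have ba: "b < a" using g ps unfolding good_def by auto
  have w: "wgt ps t = cnt t xs" using wgt_decomp[OF nx tab] ps by simp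
  have w2: "wgt (rev ps) t = cnt t ys"
  proof -
    have "rev ps = rev ys @ (a,b) # rev xs" using ps by simp
    moreover have "t \<notin> set (vals (rev ys))" using ny by (simp add: set_vals)
    ultimately show ?thesis using wgt_decomp[of t "rev ys" a b "rev xs"] tab by simp
  qed
  have sx: "shape (Suc t) xs = shape t xs" using shape_Suc[OF nx] .
  have sy: "shape (Suc t) ys = shape t ys" using shape_Suc[OF ny] .
  have nnx: "nn (shape t xs) = cnt t xs" using nn_shape[OF nx] .
  have nny: "nn (shape t ys) = cnt t ys" using nn_shape[OF ny] .
  have succ: "successively (\<lambda>x y. snd x < fst y) ((a,b) # ys)"
    using g ps unfolding good_def by (simp add: successively_append_iff)
  show ?thesis
  proof (cases "t = b")
    case True
    have tin: "t \<in> snd ` set ps" using ps True by force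
    have hy: "shape t ys = [] \<or> fst (hd (shape t ys)) = None" using chain[OF succ] True by simp
    have e1: "shape (Suc t) ps = shape t xs @ (None, t) # shape t ys" using ps True ba sx sy by auto
    have e2: "shape t ps = shape t xs @ shape t ys" using ps True by auto
    have "stepf U (wgt ps t) t (shape t ps) = shape t xs @ (None, t) # shape t ys"
      unfolding stepf_def e2 using insN_split[OF _ hy, of "shape t xs" "wgt ps t" "(None,t)"] w nnx by simp
    then show ?thesis using e1 e2 tin w w2 nnx nny by simp
  next
    case False
    then have ta: "t = a" using tab by simp
    have tin: "t \<notin> snd ` set ps" using ps ta ba nx ny by (auto simp: set_vals)
    have e1: "shape (Suc t) ps = shape t xs @ (Some t, b) # shape t ys" using ps ta ba sx sy by auto
    have e2: "shape t ps = shape t xs @ (None, b) # shape t ys" using ps ta ba by auto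
    have "stepf D (wgt ps t) t (shape t ps) = shape t xs @ (Some t, b) # shape t ys"
      unfolding stepf_def e2 using closeN_split[of "shape t xs" "wgt ps t" t b "shape t ys"] w nnx by simp
    then show ?thesis using e1 e2 tin w w2 nnx nny by simp
  qed
qed



definition FZP :: "nat \<Rightarrow> (nat \<times> nat) list \<Rightarrow> step list \<times> nat list" where
  "FZP N ps = (map (\<lambda>t. if t \<in> snd ` set ps then U else D) [1..<N+1], map (wgt ps) [1..<N+1])"

fun Bld :: "step list \<times> nat list \<Rightarrow> nat \<Rightarrow> st" where
  "Bld Hi 0 = []"
| "Bld Hi (Suc k) = stepf (fst Hi ! k) (snd Hi ! k) (Suc k) (Bld Hi k)"

lemma good_vals: "good N ps \<Longrightarrow> x \<in> set ps \<Longrightarrow> fst x \<in> {1..N} \<and> snd x \<in> {1..N}"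
  unfolding good_def set_vals by blast

lemma good_vals': "good N ps \<Longrightarrow> (a,b) \<in> set ps \<Longrightarrow> 1 \<le> a \<and> a \<le> N \<and> 1 \<le> b \<and> b \<le> N"
  using good_vals[of N ps "(a,b)"] by simp

lemma shape_one: "good N ps \<Longrightarrow> shape (Suc 0) ps = []"
proof -
  assume g: "good N ps"
  have "filter (\<lambda>(a,b). b < Suc 0) ps = []"
    using good_vals[OF g] by (force simp: filter_empty_conv)
  then show ?thesis unfolding shape_def by simp
qed

lemma nth_FZP: "i < N \<Longrightarrow> fst (FZP N ps) ! i = (if Suc i \<in> snd ` set ps then U else D)"
  "i < N \<Longrightarrow> snd (FZP N ps) ! i = wgt ps (Suc i)"
  by (simp_all add: FZP_def del: upt_Suc)

lemma reach: "good N ps \<Longrightarrow> t \<le> N \<Longrightarrow> shape (Suc t) ps = Bld (FZP N ps) t"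
proof (induction t)
  case 0
  then show ?case using shape_one by simp
next
  case (Suc t)
  have "Suc t \<in> {1..N}" using Suc.prems by simp
  note k = key[OF Suc.prems(1) this]
  have "fst (FZP N ps) ! t = (if Suc t \<in> snd ` set ps then U else D)"
    "snd (FZP N ps) ! t = wgt ps (Suc t)" using Suc.prems nth_FZP by auto
  then show ?case using k Suc by simp
qed

lemma shape_full: "good N ps \<Longrightarrow> shape (Suc N) ps = map (\<lambda>(a,b). (Some a, b)) ps"
proof -
  assume g: "good N ps"
  have "filter (\<lambda>(a,b). b < Suc N) ps = ps"
    by (auto simp: filter_id_conv dest: good_vals'[OF g])
  moreover have "map (\<lambda>(a,b). (if a < Suc N then Some a else None, b)) ps = map (\<lambda>(a,b). (Some a, b)) ps"
    by (auto dest: good_vals'[OF g])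
  ultimately show ?thesis unfolding shape_def by simp
qed

lemma FZP_inj: "good N ps \<Longrightarrow> good N qs \<Longrightarrow> FZP N ps = FZP N qs \<Longrightarrow> ps = qs"
proof -
  assume g: "good N ps" "good N qs" "FZP N ps = FZP N qs"
  have "shape (Suc N) ps = shape (Suc N) qs" using reach[OF g(1), of N] reach[OF g(2), of N] g(3) by simp
  then have "map (\<lambda>(a,b). (Some a, b)) ps = map (\<lambda>(a,b). (Some a, b)) qs"
    using shape_full g by simp
  moreover have "inj (\<lambda>(a::nat,b::nat). (Some a, b))" by (auto simp: inj_def)
  ultimately show ?thesis by simp
qed

lemma height_one[simp]: "height M (Suc 0) = 0"
  by (simp add: height_def)

lemma height_Suc: "1 \<le> t \<Longrightarrow> t \<le> length M \<Longrightarrow>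
  height M (Suc t) = height M t + (if M ! (t-1) = U then 1 else if M ! (t-1) = D then -1 else 0)"
proof -
  assume a: "1 \<le> t" "t \<le> length M"
  have "take t M = take (t-1) M @ [M ! (t-1)]"
    using a take_Suc_conv_app_nth[of "t-1" M] by simp
  then show ?thesis unfolding height_def using a by auto
qed

lemma length_FZP[simp]: "length (fst (FZP N ps)) = N" "length (snd (FZP N ps)) = N"
  by (auto simp: FZP_def)


lemma height_FZP: "good N ps \<Longrightarrow> 1 \<le> t \<Longrightarrow> t \<le> Suc N \<Longrightarrow> height (fst (FZP N ps)) t = int (nn (shape t ps))"
proof (induction t)
  case 0
  then show ?case by simp
next
  case (Suc t)
  note SP = Suc.prems
  note IH = Suc.IH
  show ?case
  proof (cases t)
    case 0
    then show ?thesis using shape_one[OF Suc.prems(1)] by simp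
  next
    case (Suc t')
    have t: "t \<in> {1..N}" using SP Suc by simp
    note k = key[OF \<open>good N ps\<close> t]
    have "height (fst (FZP N ps)) (Suc t) = height (fst (FZP N ps)) t
        + (if t \<in> snd ` set ps then 1 else -1)"
      using height_Suc[of t "fst (FZP N ps)"] t nth_FZP(1)[of "t-1" N ps] by (cases "t \<in> snd ` set ps") auto
    moreover have "height (fst (FZP N ps)) t = int (nn (shape t ps))" using IH SP t by simp
    ultimately show ?thesis using Suc SP k by (cases "t \<in> snd ` set ps") auto
  qed
qed

definition valid :: "nat \<Rightarrow> step list \<times> nat list \<Rightarrow> bool" where
  "valid N Hi \<longleftrightarrow> length (fst Hi) = N \<and> length (snd Hi) = N \<and> set (fst Hi) \<subseteq> {U, D}
     \<and> height (fst Hi) (Suc N) = 0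
     \<and> (\<forall>i\<in>{1..N}. (fst Hi ! (i-1) = U \<longrightarrow> int (snd Hi ! (i-1)) \<le> height (fst Hi) i)
                  \<and> (fst Hi ! (i-1) = D \<longrightarrow> int (snd Hi ! (i-1)) \<le> height (fst Hi) i - 1))"

lemma FZP_valid: "good N ps \<Longrightarrow> valid N (FZP N ps)"
proof -
  assume g: "good N ps"
  have "set (fst (FZP N ps)) \<subseteq> {U, D}" by (auto simp: FZP_def)
  moreover have "height (fst (FZP N ps)) (Suc N) = 0"
    using height_FZP[OF g, of "Suc N"] shape_full[OF g] by (simp add: nn_def filter_empty_conv split: prod.splits)
  moreover have "\<forall>i\<in>{1..N}. (fst (FZP N ps) ! (i-1) = U \<longrightarrow> int (snd (FZP N ps) ! (i-1)) \<le> height (fst (FZP N ps)) i)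
                  \<and> (fst (FZP N ps) ! (i-1) = D \<longrightarrow> int (snd (FZP N ps) ! (i-1)) \<le> height (fst (FZP N ps)) i - 1)"
  proof
    fix i assume i: "i \<in> {1..N}"
    note k = key[OF g i]
    have "height (fst (FZP N ps)) i = int (nn (shape i ps))" using height_FZP[OF g] i by simp
    then show "(fst (FZP N ps) ! (i-1) = U \<longrightarrow> int (snd (FZP N ps) ! (i-1)) \<le> height (fst (FZP N ps)) i)
                  \<and> (fst (FZP N ps) ! (i-1) = D \<longrightarrow> int (snd (FZP N ps) ! (i-1)) \<le> height (fst (FZP N ps)) i - 1)"
      using k i nth_FZP[of "i-1" N ps] by (cases "i \<in> snd ` set ps") auto
  qed
  ultimately show ?thesis unfolding valid_def by simp
qed



definition valsS :: "st \<Rightarrow> nat list" where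
  "valsS S = concat (map (\<lambda>(a,b). case a of None \<Rightarrow> [b] | Some a' \<Rightarrow> [a',b]) S)"

lemma valsS_simps[simp]: "valsS [] = []" "valsS (xs @ ys) = valsS xs @ valsS ys"
  "valsS ((None, b) # ys) = b # valsS ys" "valsS ((Some a, b) # ys) = a # b # valsS ys"
  by (auto simp: valsS_def)

definition relS :: "(nat option \<times> nat) \<Rightarrow> (nat option \<times> nat) \<Rightarrow> bool" where
  "relS x y = (case fst y of None \<Rightarrow> True | Some a \<Rightarrow> snd x < a)"

definition altS :: "st \<Rightarrow> bool" where
  "altS S \<longleftrightarrow> successively relS S \<and> (\<forall>x\<in>set S. relS x x)"

lemma valsS_mem: "x \<in> set S \<Longrightarrow> snd x \<in> set (valsS S) \<and> (\<forall>a. fst x = Some a \<longrightarrow> a \<in> set (valsS S))"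
proof (induction S)
  case Nil
  then show ?case by simp
next
  case (Cons y S)
  obtain a b where y: "y = (a,b)" by force
  show ?case using Cons y by (cases a) auto
qed

definition bldinv :: "step list \<times> nat list \<Rightarrow> nat \<Rightarrow> bool" where
  "bldinv Hi k \<longleftrightarrow> int (nn (Bld Hi k)) = height (fst Hi) (Suc k) \<and> distinct (valsS (Bld Hi k))
      \<and> set (valsS (Bld Hi k)) = {1..k} \<and> altS (Bld Hi k)"

lemma inv_step:
  assumes v: "valid N Hi" and k: "k < N" and I: "bldinv Hi k"
  shows "bldinv Hi (Suc k)"
proof -
  define S where "S = Bld Hi k"
  define s where "s = fst Hi ! k"
  define w where "w = snd Hi ! k"
  have B: "Bld Hi (Suc k) = stepf s w (Suc k) S" by (simp add: S_def s_def w_def)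
  have sUD: "s = U \<or> s = D" using v k unfolding valid_def s_def by (auto dest: nth_mem)
  have hs: "height (fst Hi) (Suc (Suc k)) = height (fst Hi) (Suc k) + (if s = U then 1 else -1)"
    using height_Suc[of "Suc k" "fst Hi"] v k sUD unfolding valid_def s_def by auto
  have nnS: "int (nn S) = height (fst Hi) (Suc k)" and dS: "distinct (valsS S)"
    and sS: "set (valsS S) = {1..k}" and aS: "altS S" using I unfolding bldinv_def S_def by auto
  have bnd: "(s = U \<longrightarrow> int w \<le> height (fst Hi) (Suc k)) \<and> (s = D \<longrightarrow> int w \<le> height (fst Hi) (Suc k) - 1)"
    using v k unfolding valid_def s_def w_def by (auto dest: bspec[of _ _ "Suc k"])
  show ?thesis
  proof (cases "s = U")
    case True
    then have "w \<le> nn S" using bnd nnS by simp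
    then obtain X Y where XY: "S = X @ Y" "nn X = w" "Y = [] \<or> fst (hd Y) = None"
      using decompU by blast
    have new: "Bld Hi (Suc k) = X @ (None, Suc k) # Y"
      using B True insN_split[OF XY(2) XY(3)] XY(1) by (simp add: stepf_def)
    have sub: "set (valsS X) \<subseteq> {1..k}" "set (valsS Y) \<subseteq> {1..k}" using sS XY(1) by auto
    then have nin: "Suc k \<notin> set (valsS X)" "Suc k \<notin> set (valsS Y)" by auto
    have "int (nn (Bld Hi (Suc k))) = height (fst Hi) (Suc (Suc k))"
      using new hs True nnS XY(1) by simp
    moreover have "distinct (valsS (Bld Hi (Suc k)))" "set (valsS (Bld Hi (Suc k))) = {1..Suc k}"
      using new dS sS XY(1) nin by auto
    moreover have "altS (Bld Hi (Suc k))"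
    proof -
      have "successively relS X" "successively relS Y" "\<forall>x\<in>set X. relS x x" "\<forall>x\<in>set Y. relS x x"
        using aS XY(1) unfolding altS_def by (auto simp: successively_append_iff)
      moreover have "Y = [] \<or> relS (None, Suc k) (hd Y)" using XY(3) by (auto simp: relS_def)
      ultimately show ?thesis unfolding new altS_def
        by (auto simp: successively_append_iff successively_Cons relS_def)
    qed
    ultimately show ?thesis unfolding bldinv_def by blast
  next
    case False
    then have sD: "s = D" using sUD by simp
    then have "w < nn S" using bnd nnS by simp
    then obtain X b Y where XY: "S = X @ (None, b) # Y" "nn X = w"
      using decompD by blast
    have new: "Bld Hi (Suc k) = X @ (Some (Suc k), b) # Y"
      using B sD closeN_split[OF XY(2)] XY(1) by (simp add: stepf_def)
    have sub: "set (valsS X) \<subseteq> {1..k}" "set (valsS Y) \<subseteq> {1..k}" "b \<in> {1..k}" using sS XY(1) by auto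
    then have nin: "Suc k \<notin> set (valsS X)" "Suc k \<notin> set (valsS Y)" "b \<noteq> Suc k" by auto
    have "int (nn (Bld Hi (Suc k))) = height (fst Hi) (Suc (Suc k))"
      using new hs sD nnS XY(1) by simp
    moreover have "distinct (valsS (Bld Hi (Suc k)))" "set (valsS (Bld Hi (Suc k))) = {1..Suc k}"
      using new dS sS XY(1) nin by auto
    moreover have "altS (Bld Hi (Suc k))"
    proof -
      have "successively relS X" "successively relS Y" "\<forall>x\<in>set X. relS x x" "\<forall>x\<in>set Y. relS x x"
        "Y = [] \<or> relS (None, b) (hd Y)"
        using aS XY(1) unfolding altS_def by (auto simp: successively_append_iff successively_Cons)
      moreover have "b < Suc k" using sub by auto
      moreover have "X = [] \<or> snd (last X) < Suc k"
      proof (cases "X = []")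
        case False
        then have "last X \<in> set S" using XY(1) by simp
        then show ?thesis using valsS_mem[of "last X" S] sS by auto
      qed simp
      ultimately show ?thesis unfolding new altS_def
        by (auto simp: successively_append_iff successively_Cons relS_def split: option.splits)
    qed
    ultimately show ?thesis unfolding bldinv_def by blast
  qed
qed

lemma inv_all: "valid N Hi \<Longrightarrow> k \<le> N \<Longrightarrow> bldinv Hi k"
proof (induction k)
  case 0
  then show ?case by (simp add: bldinv_def altS_def)
next
  case (Suc k)
  then show ?case using inv_step[of N Hi k] by simp
qed

definition shapeS :: "nat \<Rightarrow> st \<Rightarrow> st" where
  "shapeS t S = map (\<lambda>(a,b). (case a of None \<Rightarrow> None | Some a' \<Rightarrow> if a' < t then Some a' else None, b))
     (filter (\<lambda>(a,b). b < t) S)"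

lemma shapeS_simps[simp]: "shapeS t [] = []" "shapeS t (xs @ ys) = shapeS t xs @ shapeS t ys"
  "shapeS t ((a,b) # ys) = (if b < t then (case a of None \<Rightarrow> None | Some a' \<Rightarrow> if a' < t then Some a' else None, b) # shapeS t ys else shapeS t ys)"
  by (auto simp: shapeS_def)

lemma shapeS_id: "(\<forall>v\<in>set (valsS S). v < t) \<Longrightarrow> shapeS t S = S"
proof (induction S)
  case Nil
  then show ?case by simp
next
  case (Cons x S)
  then show ?case by (cases x) (auto split: option.splits)
qed

lemma shapeS_step: "t \<le> s \<Longrightarrow> shapeS t (stepf x w s S) = shapeS t S"
proof -
  assume ts: "t \<le> s"
  show ?thesis
  proof (cases "x = U")
    case True
    obtain X Y where "S = X @ Y" "insN w (None, s) S = X @ (None, s) # Y" using insN_gen by blast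
    then show ?thesis using True ts by (simp add: stepf_def)
  next
    case False
    from closeN_gen[of w s S] show ?thesis
    proof
      assume "closeN w s S = S" then show ?thesis using False by (simp add: stepf_def)
    next
      assume "\<exists>X b Y. S = X @ (None, b) # Y \<and> closeN w s S = X @ (Some s, b) # Y"
      then obtain X b Y where "S = X @ (None, b) # Y" "closeN w s S = X @ (Some s, b) # Y" by blast
      then show ?thesis using False ts by (simp add: stepf_def)
    qed
  qed
qed

lemma shapeS_Bld: "valid N Hi \<Longrightarrow> k + d \<le> N \<Longrightarrow> shapeS (Suc k) (Bld Hi (k + d)) = Bld Hi k"
proof (induction d)
  case 0
  have "set (valsS (Bld Hi k)) = {1..k}" using inv_all[OF 0(1), of k] 0(2) unfolding bldinv_def by simp
  then show ?case by (simp add: shapeS_id)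
next
  case (Suc d)
  then show ?case using shapeS_step[of "Suc k" "Suc (k + d)"] by simp
qed

definition unS :: "st \<Rightarrow> (nat \<times> nat) list" where
  "unS S = map (\<lambda>(a,b). (the a, b)) S"

lemma closed_props1: "\<forall>x\<in>set S. fst x \<noteq> None \<Longrightarrow> map (\<lambda>(a,b). (Some a, b)) (unS S) = S"
  by (induction S) (auto simp: unS_def)

lemma closed_props2: "\<forall>x\<in>set S. fst x \<noteq> None \<Longrightarrow> vals (unS S) = valsS S"
  by (induction S) (auto simp: unS_def)

lemma closed_props3: "\<forall>x\<in>set S. fst x \<noteq> None \<Longrightarrow> altS S \<Longrightarrow>
   successively (\<lambda>x y. snd x < fst y) (unS S) \<and> (\<forall>x\<in>set (unS S). snd x < fst x)"
proof (induction S)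
  case Nil
  then show ?case by (simp add: unS_def)
next
  case (Cons x S)
  have a: "altS S" using Cons.prems unfolding altS_def by (auto simp: successively_Cons)
  have h: "S \<noteq> [] \<Longrightarrow> relS x (hd S)" "relS x x" using Cons.prems unfolding altS_def by (auto simp: successively_Cons)
  have "S \<noteq> [] \<Longrightarrow> fst (hd S) \<noteq> None" using Cons.prems by simp
  then show ?case using Cons.IH[OF _ a] Cons.prems h
    by (cases x; cases S) (auto simp: unS_def relS_def successively_Cons)
qed

lemma stepf_inj:
  assumes "s = U \<or> s = D" "s' = U \<or> s' = D"
    and "s = U \<Longrightarrow> w \<le> nn S" "s = D \<Longrightarrow> w < nn S"
    and "s' = U \<Longrightarrow> w' \<le> nn S" "s' = D \<Longrightarrow> w' < nn S"
    and fr: "\<forall>x\<in>set S. snd x \<noteq> t \<and> fst x \<noteq> Some t"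
    and eq: "stepf s w t S = stepf s' w' t S"
  shows "s = s' \<and> w = w'"
proof -
  have lenU: "\<And>w. length (insN w (None, t) S) = Suc (length S)" using insN_gen
    by (metis length_Cons length_append add_Suc_right)
  have lenD: "\<And>w. length (closeN w t S) = length S" using closeN_gen
    by (metis length_Cons length_append)
  have ss: "s = s'" using eq assms(1,2) lenU lenD unfolding stepf_def
    by (metis n_not_Suc_n step.distinct(1))
  show ?thesis
  proof (cases "s = U")
    case True
    obtain X Y where XY: "S = X @ Y" "nn X = w" "Y = [] \<or> fst (hd Y) = None" using decompU assms(3) True by blast
    obtain X' Y' where XY': "S = X' @ Y'" "nn X' = w'" "Y' = [] \<or> fst (hd Y') = None" using decompU assms(5) True ss by blast
    have "X @ (None, t) # Y = X' @ (None, t) # Y'"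
      using eq True ss insN_split[OF XY(2,3)] insN_split[OF XY'(2,3)] XY(1) XY'(1) by (simp add: stepf_def)
    moreover have "\<forall>z\<in>set S. z \<noteq> (None, t)" using fr by auto
    then have "\<forall>z\<in>set X. z \<noteq> (None, t)" "\<forall>z\<in>set X'. z \<noteq> (None, t)"
      unfolding XY(1) apply simp using \<open>\<forall>z\<in>set S. z \<noteq> (None, t)\<close> unfolding XY'(1) by simp
    ultimately have "X = X'" using split_unique[of X _ Y X' _ Y' "\<lambda>z. z = (None, t)"] by blast
    then show ?thesis using XY XY' ss by simp
  next
    case False
    then have sD: "s = D" "s' = D" using assms(1) ss by auto
    obtain X b Y where XY: "S = X @ (None, b) # Y" "nn X = w" using decompD assms(4) sD by blast
    obtain X' b' Y' where XY': "S = X' @ (None, b') # Y'" "nn X' = w'" using decompD assms(6) sD by blast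
    have e1: "stepf s w t S = X @ (Some t, b) # Y"
      using sD by (simp add: stepf_def XY(1) closeN_split[OF XY(2)])
    have e2: "stepf s' w' t S = X' @ (Some t, b') # Y'"
      using sD by (simp add: stepf_def XY'(1) closeN_split[OF XY'(2)])
    have "X @ (Some t, b) # Y = X' @ (Some t, b') # Y'"
      using eq e1 e2 by simp
    moreover have "\<forall>z\<in>set S. fst z \<noteq> Some t" using fr by auto
    then have "\<forall>z\<in>set X. fst z \<noteq> Some t" "\<forall>z\<in>set X'. fst z \<noteq> Some t"
      unfolding XY(1) apply simp using \<open>\<forall>z\<in>set S. fst z \<noteq> Some t\<close> unfolding XY'(1) by simp
    ultimately have "X = X'" using split_unique[of X _ Y X' _ Y' "\<lambda>z. fst z = Some t"] by auto
    then show ?thesis using XY XY' ss by simp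
  qed
qed

lemma surj_FZP:
  assumes v: "valid N Hi"
  shows "\<exists>ps. good N ps \<and> FZP N ps = Hi"
proof -
  define S where "S = Bld Hi N"
  have I: "bldinv Hi N" using inv_all[OF v] by simp
  have "nn S = 0" using I v unfolding bldinv_def valid_def S_def by simp
  then have cl: "\<forall>x\<in>set S. fst x \<noteq> None" by (auto simp: nn_def filter_empty_conv)
  define ps where "ps = unS S"
  have cp1: "map (\<lambda>(a,b). (Some a, b)) ps = S" using closed_props1[OF cl] ps_def by simp
  have g: "good N ps" unfolding good_def ps_def
    using closed_props2[OF cl] closed_props3[OF cl] I unfolding bldinv_def S_def by auto
  have shp: "shape (Suc k) ps = Bld Hi k" if "k \<le> N" for k
  proof -
    have "shape (Suc k) ps = shapeS (Suc k) (map (\<lambda>(a,b). (Some a, b)) ps)"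
      by (induction ps) (auto simp: shape_def shapeS_def)
    also have "\<dots> = shapeS (Suc k) S" using cp1 by simp
    also have "\<dots> = Bld Hi k" using shapeS_Bld[OF v, of k "N - k"] that S_def by simp
    finally show ?thesis .
  qed
  have "\<forall>k<N. fst (FZP N ps) ! k = fst Hi ! k \<and> snd (FZP N ps) ! k = snd Hi ! k"
  proof (intro allI impI)
    fix k assume k: "k < N"
    define T where "T = Bld Hi k"
    have e1: "Bld (FZP N ps) (Suc k) = stepf (fst (FZP N ps) ! k) (snd (FZP N ps) ! k) (Suc k) T"
      using reach[OF g, of k] shp[of k] k T_def by simp
    have e2: "Bld (FZP N ps) (Suc k) = Bld Hi (Suc k)" using reach[OF g, of "Suc k"] shp[of "Suc k"] k by simp
    have e3: "Bld Hi (Suc k) = stepf (fst Hi ! k) (snd Hi ! k) (Suc k) T" by (simp add: T_def)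
    have Ik: "bldinv Hi k" using inv_all[OF v] k by simp
    have fr: "\<forall>x\<in>set T. snd x \<noteq> Suc k \<and> fst x \<noteq> Some (Suc k)"
    proof
      fix x assume "x \<in> set T"
      then show "snd x \<noteq> Suc k \<and> fst x \<noteq> Some (Suc k)"
        using valsS_mem[of x T] Ik unfolding bldinv_def T_def by force
    qed
    have sk: "Suc k \<in> {1..N}" using k by simp
    note kk = key[OF g sk]
    have nT: "nn T = nn (shape (Suc k) ps)" using shp[of k] k T_def by simp
    have b1: "fst (FZP N ps) ! k = U \<or> fst (FZP N ps) ! k = D"
      "fst (FZP N ps) ! k = U \<Longrightarrow> snd (FZP N ps) ! k \<le> nn T"
      "fst (FZP N ps) ! k = D \<Longrightarrow> snd (FZP N ps) ! k < nn T"
      using kk nT nth_FZP[OF k, of ps] by (auto split: if_splits)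
    have vs: "fst Hi ! k = U \<or> fst Hi ! k = D" using v k unfolding valid_def by (auto dest: nth_mem)
    have vb: "(fst Hi ! k = U \<longrightarrow> int (snd Hi ! k) \<le> height (fst Hi) (Suc k)) \<and> (fst Hi ! k = D \<longrightarrow> int (snd Hi ! k) \<le> height (fst Hi) (Suc k) - 1)"
      using v k unfolding valid_def by (auto dest: bspec[of _ _ "Suc k"])
    have hT: "int (nn T) = height (fst Hi) (Suc k)" using Ik unfolding bldinv_def T_def by simp
    have b2: "fst Hi ! k = U \<Longrightarrow> snd Hi ! k \<le> nn T" "fst Hi ! k = D \<Longrightarrow> snd Hi ! k < nn T"
      using vb hT by auto
    show "fst (FZP N ps) ! k = fst Hi ! k \<and> snd (FZP N ps) ! k = snd Hi ! k"
      using stepf_inj[OF b1(1) vs b1(2,3) b2 fr] e1 e2 e3 by simp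
  qed
  then have "FZP N ps = Hi" using v unfolding valid_def
    by (metis length_FZP nth_equalityI prod.collapse)
  then show ?thesis using g by blast
qed



definition cmp :: "nat \<Rightarrow> nat \<times> nat \<Rightarrow> nat \<times> nat" where
  "cmp N p = (N + 1 - snd p, N + 1 - fst p)"

definition rcps :: "nat \<Rightarrow> (nat \<times> nat) list \<Rightarrow> (nat \<times> nat) list" where
  "rcps N ps = rev (map (cmp N) ps)"

lemma vals_rcps: "vals (rcps N ps) = rev (map (\<lambda>v. N + 1 - v) (vals ps))"
  by (induction ps rule: vals.induct) (auto simp: rcps_def cmp_def)

lemma wgt_Cons: "wgt ((a,b)#xs) t = (if a \<noteq> t \<and> b \<noteq> t then (if b < t \<and> t < a then 1 else 0) + wgt xs t else 0)"
  by (auto simp: wgt_def cnt_def)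

lemma wgt_map_cmp: "\<forall>p\<in>set qs. fst p \<in> {1..N} \<and> snd p \<in> {1..N} \<Longrightarrow> t \<in> {1..N} \<Longrightarrow>
  wgt (map (cmp N) qs) (N + 1 - t) = wgt qs t"
proof (induction qs)
  case Nil
  then show ?case by (simp add: wgt_def cnt_def)
next
  case (Cons p qs)
  obtain a b where p: "p = (a,b)" by force
  have r: "a \<in> {1..N}" "b \<in> {1..N}" using Cons.prems p by auto
  have "map (cmp N) (p # qs) = (N + 1 - b, N + 1 - a) # map (cmp N) qs" by (simp add: p cmp_def)
  then show ?case using Cons r p by (auto simp add: wgt_Cons)
qed

lemma image_cmpl: "(\<lambda>v. N + 1 - v) ` {1..N} = {1..(N::nat)}"
proof
  show "(\<lambda>v. N + 1 - v) ` {1..N} \<subseteq> {1..N}" by auto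
  show "{1..N} \<subseteq> (\<lambda>v. N + 1 - v) ` {1..N}"
  proof
    fix x assume "x \<in> {1..N}"
    then show "x \<in> (\<lambda>v. N + 1 - v) ` {1..N}" by (intro image_eqI[of _ _ "N + 1 - x"]) auto
  qed
qed

lemma good_rcps: "good N ps \<Longrightarrow> good N (rcps N ps)"
proof -
  assume g: "good N ps"
  have rng: "\<And>p. p \<in> set ps \<Longrightarrow> fst p \<in> {1..N} \<and> snd p \<in> {1..N}" using good_vals[OF g] by blast
  have s1: "successively (\<lambda>x y. snd x < fst y) (rcps N ps)"
  proof -
    have "successively (\<lambda>x y. snd x < fst y) ps" using g unfolding good_def by simp
    then have "successively (\<lambda>x y. snd (cmp N y) < fst (cmp N x)) ps"
      by (rule successively_mono) (auto simp: cmp_def dest!: rng)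
    then show ?thesis by (simp add: rcps_def successively_map)
  qed
  have s2: "\<forall>x\<in>set (rcps N ps). snd x < fst x"
    using g rng unfolding good_def rcps_def cmp_def by fastforce
  have d: "distinct (vals (rcps N ps))"
  proof -
    have "inj_on (\<lambda>v. N + 1 - v) (set (vals ps))" using g unfolding good_def by (auto simp: inj_on_def)
    then show ?thesis using g unfolding good_def vals_rcps by (simp add: distinct_map)
  qed
  have "set (vals (rcps N ps)) = {1..N}" using g unfolding good_def vals_rcps using image_cmpl[of N] by simp
  then show ?thesis using s1 s2 d unfolding good_def by simp
qed

lemma fst_snd_disj: "distinct (vals ps) \<Longrightarrow> \<forall>x\<in>set ps. snd x < fst x \<Longrightarrow> fst ` set ps \<inter> snd ` set ps = {}"
proof (induction ps rule: vals.induct)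
  case 1
  then show ?case by simp
next
  case (2 a b ps)
  then show ?case by (force simp: set_vals)
qed

lemma rc_FZP: assumes g: "good N ps" shows "rc (FZP N ps) = FZP N (rcps N ps)"
proof -
  define M where "M = fst (FZP N ps)"
  define W where "W = snd (FZP N ps)"
  have lM: "length M = N" by (simp add: M_def)
  have disj: "fst ` set ps \<inter> snd ` set ps = {}" using g fst_snd_disj unfolding good_def by simp
  have cover: "fst ` set ps \<union> snd ` set ps = {1..N}" using g unfolding good_def set_vals by simp
  have mem: "t \<in> snd ` set (rcps N ps) \<longleftrightarrow> N + 1 - t \<in> fst ` set ps" if "t \<in> {1..N}" for t
  proof
    assume "t \<in> snd ` set (rcps N ps)"
    then obtain p where "p \<in> set ps" "t = N + 1 - fst p" by (auto simp: rcps_def cmp_def)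
    moreover have "fst p \<in> {1..N}" using good_vals[OF g \<open>p \<in> set ps\<close>] by simp
    ultimately show "N + 1 - t \<in> fst ` set ps" by force
  next
    assume "N + 1 - t \<in> fst ` set ps"
    then obtain p where "p \<in> set ps" "fst p = N + 1 - t" by auto
    then have "cmp N p \<in> set (rcps N ps)" "snd (cmp N p) = t" using that by (auto simp: rcps_def cmp_def)
    then show "t \<in> snd ` set (rcps N ps)" by force
  qed
  have A: "rev (map flip M) = fst (FZP N (rcps N ps))"
  proof (rule nth_equalityI)
    show "length (rev (map flip M)) = length (fst (FZP N (rcps N ps)))" using lM by simp
  next
    fix i assume "i < length (rev (map flip M))"
    then have i: "i < N" using lM by simp
    have t: "N - i \<in> {1..N}" using i by auto
    have "rev (map flip M) ! i = flip (M ! (N - Suc i))" using i lM by (simp add: rev_nth)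
    also have "\<dots> = flip (if N - i \<in> snd ` set ps then U else D)"
      using nth_FZP(1)[of "N - Suc i" N ps] i unfolding M_def by (simp add: Suc_diff_Suc)
    also have "\<dots> = (if Suc i \<in> snd ` set (rcps N ps) then U else D)"
      using mem[of "Suc i"] i disj cover t by auto
    finally show "rev (map flip M) ! i = fst (FZP N (rcps N ps)) ! i" using nth_FZP(1)[OF i] by simp
  qed
  have B: "rev (map (\<lambda>i. if M ! (i - 1) \<in> {U, H} then nat (height M i - int (W ! (i - 1)))
                     else nat (height M i - 1 - int (W ! (i - 1)))) [1..<N+1]) = snd (FZP N (rcps N ps))"
  proof (rule nth_equalityI)
    show "length (rev (map (\<lambda>i. if M ! (i - 1) \<in> {U, H} then nat (height M i - int (W ! (i - 1)))
                     else nat (height M i - 1 - int (W ! (i - 1)))) [1..<N+1])) = length (snd (FZP N (rcps N ps)))"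
      by simp
  next
    fix i assume "i < length (rev (map (\<lambda>i. if M ! (i - 1) \<in> {U, H} then nat (height M i - int (W ! (i - 1)))
                     else nat (height M i - 1 - int (W ! (i - 1)))) [1..<N+1]))"
    then have i: "i < N" by (simp del: upt_Suc)
    define t where "t = N - i"
    have t: "t \<in> {1..N}" using i t_def by auto
    have e: "rev (map (\<lambda>i. if M ! (i - 1) \<in> {U, H} then nat (height M i - int (W ! (i - 1)))
                     else nat (height M i - 1 - int (W ! (i - 1)))) [1..<N+1]) ! i
       = (if M ! (t - 1) \<in> {U, H} then nat (height M t - int (W ! (t - 1)))
                     else nat (height M t - 1 - int (W ! (t - 1))))"
      using i unfolding t_def by (simp add: rev_nth Suc_diff_Suc del: upt_Suc)
    have hM: "height M t = int (nn (shape t ps))" using height_FZP[OF g] t unfolding M_def by simp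
    note k = key[OF g t]
    have Mt: "M ! (t - 1) = (if t \<in> snd ` set ps then U else D)" "W ! (t - 1) = wgt ps t"
    proof -
      have t1: "t - 1 < N" "Suc (t - 1) = t" using t by auto
      show "M ! (t - 1) = (if t \<in> snd ` set ps then U else D)" "W ! (t - 1) = wgt ps t"
        using nth_FZP[OF t1(1), of ps] t1(2) unfolding M_def W_def by simp_all
    qed
    have "(if M ! (t - 1) \<in> {U, H} then nat (height M t - int (W ! (t - 1)))
                     else nat (height M t - 1 - int (W ! (t - 1)))) = wgt (rev ps) t"
      using hM k Mt by (cases "t \<in> snd ` set ps") auto
    also have "\<dots> = wgt (rcps N ps) (N + 1 - t)"
      using wgt_map_cmp[of "rev ps" N t] t good_vals[OF g] by (simp add: rcps_def rev_map)
    also have "N + 1 - t = Suc i" using i t_def by simp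
    finally show "rev (map (\<lambda>i. if M ! (i - 1) \<in> {U, H} then nat (height M i - int (W ! (i - 1)))
                     else nat (height M i - 1 - int (W ! (i - 1)))) [1..<N+1]) ! i = snd (FZP N (rcps N ps)) ! i"
      using e nth_FZP(2)[OF i] by simp
  qed
  show ?thesis unfolding rc_def Let_def using A B lM unfolding M_def W_def by simp
qed



definition pairs :: "nat \<Rightarrow> (nat \<Rightarrow> nat) \<Rightarrow> (nat \<times> nat) list" where
  "pairs n p = map (\<lambda>m. (p (2*m+1), p (2*m+2))) [0..<n]"

lemma length_pairs[simp]: "length (pairs n p) = n" by (simp add: pairs_def)

lemma nth_pairs: "m < n \<Longrightarrow> pairs n p ! m = (p (2*m+1), p (2*m+2))" by (simp add: pairs_def)

lemma vals_pairs: "vals (pairs n p) = map p [1..<2*n+1]"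
proof (induction n)
  case 0
  then show ?case by (simp add: pairs_def)
next
  case (Suc n)
  have "pairs (Suc n) p = pairs n p @ [(p (2*n+1), p (2*n+2))]" by (simp add: pairs_def)
  moreover have "[1..<2 * Suc n + 1] = [1..<2*n+1] @ [2*n+1, 2*n+2]"
    by (simp add: upt_Suc_append[symmetric] numeral_2_eq_2)
  ultimately show ?case using Suc by simp
qed

lemma good_pairs:
  assumes pm: "p permutes {1..2*n}" and al: "alternating (2*n) p"
  shows "good (2*n) (pairs n p)"
proof -
  have s1: "successively (\<lambda>x y. snd x < fst y) (pairs n p)"
    unfolding successively_conv_nth
  proof (intro allI impI)
    fix i assume "Suc i < length (pairs n p)"
    then have i: "Suc i < n" by simp
    have "2*i+2 \<in> {1..<2*n}" "even (2*i+2)" using i by auto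
    then have "p (2*i+2) < p (Suc (2*i+2))" using al unfolding alternating_def by blast
    then show "snd (pairs n p ! i) < fst (pairs n p ! Suc i)" using i by (simp add: nth_pairs)
  qed
  have s2: "\<forall>x\<in>set (pairs n p). snd x < fst x"
  proof
    fix x assume "x \<in> set (pairs n p)"
    then obtain m where m: "m < n" "x = pairs n p ! m" by (auto simp: in_set_conv_nth)
    have "2*m+1 \<in> {1..<2*n}" "odd (2*m+1)" using m by auto
    then have "p (2*m+1) > p (Suc (2*m+1))" using al unfolding alternating_def by blast
    then show "snd x < fst x" using m by (simp add: nth_pairs)
  qed
  have d: "distinct (vals (pairs n p))"
    unfolding vals_pairs using permutes_inj_on[OF pm] by (simp add: distinct_map)
  have "set (vals (pairs n p)) = p ` {1..2*n}"
    unfolding vals_pairs by (simp add: atLeastLessThanSuc_atLeastAtMost del: upt_Suc)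
  also have "\<dots> = {1..2*n}" using permutes_image[OF pm] .
  finally show ?thesis using s1 s2 d unfolding good_def by simp
qed

lemma perm_from_pairs:
  assumes "p permutes {1..2*n}" "q permutes {1..2*n}" "pairs n p = pairs n q"
  shows "p = q"
proof
  fix j
  have "map p [1..<2*n+1] = map q [1..<2*n+1]" using assms(3) vals_pairs by metis
  then have "\<forall>x\<in>{1..2*n}. p x = q x" by (simp add: atLeastLessThanSuc_atLeastAtMost del: upt_Suc)
  then show "p j = q j" using permutes_not_in[OF assms(1)] permutes_not_in[OF assms(2)] by metis
qed

lemma alt_of_pairs:
  assumes s: "successively (\<lambda>x y. snd x < fst y) (pairs n p)" and f: "\<forall>x\<in>set (pairs n p). snd x < fst x"
  shows "alternating (2*n) p"
  unfolding alternating_def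
proof
  fix i assume i: "i \<in> {1..<2*n}"
  show "(odd i \<longrightarrow> p (Suc i) < p i) \<and> (even i \<longrightarrow> p i < p (Suc i))"
  proof (cases "odd i")
    case True
    then obtain m where m: "i = 2*m+1" by (metis oddE)
    then have "m < n" using i by auto
    then have "pairs n p ! m \<in> set (pairs n p)" by simp
    then show ?thesis using f True m \<open>m < n\<close> by (auto simp: nth_pairs)
  next
    case False
    define m where "m = i div 2 - 1"
    have m: "i = 2*m+2" using False i unfolding m_def by auto
    then have "Suc m < n" using i by auto
    then have "snd (pairs n p ! m) < fst (pairs n p ! Suc m)" using successively_nth[OF s] by simp
    then show ?thesis using False m \<open>Suc m < n\<close> by (auto simp: nth_pairs)
  qed
qed

lemma vals_nth: "m < length ps \<Longrightarrow> vals ps ! (2*m) = fst (ps ! m) \<and> vals ps ! (2*m+1) = snd (ps ! m)"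
proof (induction ps arbitrary: m rule: vals.induct)
  case 1
  then show ?case by simp
next
  case (2 a b ps)
  then show ?case by (cases m) auto
qed

lemma vals_inj: "vals ps = vals qs \<Longrightarrow> ps = qs"
proof (induction ps arbitrary: qs rule: vals.induct)
  case 1
  then show ?case by (cases qs rule: vals.cases) auto
next
  case (2 a b ps)
  then show ?case by (cases qs rule: vals.cases) auto
qed

definition mk :: "nat \<Rightarrow> (nat \<times> nat) list \<Rightarrow> nat \<Rightarrow> nat" where
  "mk n ps j = (if j \<in> {1..2*n} then vals ps ! (j - 1) else j)"

lemma mk_props:
  assumes g: "good (2*n) ps"
  shows "mk n ps permutes {1..2*n}" "pairs n (mk n ps) = ps" "alternating (2*n) (mk n ps)"
proof -
  have d: "distinct (vals ps)" and sv: "set (vals ps) = {1..2*n}" using g unfolding good_def by auto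
  have len: "length ps = n"
  proof -
    have "card (set (vals ps)) = length (vals ps)" using distinct_card[OF d] .
    then show ?thesis using sv by simp
  qed
  have bij: "bij_betw (mk n ps) {1..2*n} {1..2*n}"
    unfolding bij_betw_def
  proof
    show "inj_on (mk n ps) {1..2*n}"
    proof (rule inj_onI)
      fix x y assume xy: "x \<in> {1..2*n}" "y \<in> {1..2*n}" "mk n ps x = mk n ps y"
      then have "vals ps ! (x - 1) = vals ps ! (y - 1)" by (simp add: mk_def)
      moreover have "x - 1 < length (vals ps)" "y - 1 < length (vals ps)" using xy len by auto
      ultimately have "x - 1 = y - 1" using nth_eq_iff_index_eq[OF d] by blast
      then show "x = y" using xy by auto
    qed
    show "mk n ps ` {1..2*n} = {1..2*n}"
    proof
      show "mk n ps ` {1..2*n} \<subseteq> {1..2*n}"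
      proof
        fix y assume "y \<in> mk n ps ` {1..2*n}"
        then obtain x where x: "x \<in> {1..2*n}" "y = vals ps ! (x - 1)" by (auto simp: mk_def)
        then have "x - 1 < length (vals ps)" using len by auto
        then show "y \<in> {1..2*n}" using x sv nth_mem by metis
      qed
      show "{1..2*n} \<subseteq> mk n ps ` {1..2*n}"
      proof
        fix y assume "y \<in> {1..2*n}"
        then have "y \<in> set (vals ps)" using sv by simp
        then obtain i where i: "i < length (vals ps)" "vals ps ! i = y" by (auto simp: in_set_conv_nth)
        then have "Suc i \<in> {1..2*n}" "mk n ps (Suc i) = y" using len by (auto simp: mk_def)
        then show "y \<in> mk n ps ` {1..2*n}" by force
      qed
    qed
  qed
  show "mk n ps permutes {1..2*n}"
    by (rule bij_imp_permutes[OF bij]) (simp add: mk_def del: atLeastAtMost_iff)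
  show pm: "pairs n (mk n ps) = ps"
  proof (rule nth_equalityI)
    show "length (pairs n (mk n ps)) = length ps" using len by simp
  next
    fix m assume "m < length (pairs n (mk n ps))"
    then have m: "m < n" by simp
    have "mk n ps (2*m+1) = vals ps ! (2*m)" "mk n ps (2*m+2) = vals ps ! (2*m+1)" using m by (auto simp: mk_def)
    then show "pairs n (mk n ps) ! m = ps ! m" using vals_nth[of m ps] m len by (simp add: nth_pairs)
  qed
  show "alternating (2*n) (mk n ps)"
    by (rule alt_of_pairs) (use g pm in \<open>auto simp: good_def\<close>)
qed

lemma rcinv_iff:
  assumes pm: "p permutes {1..2*n}"
  shows "rc_invariant (2*n) p \<longleftrightarrow> rcps (2*n) (pairs n p) = pairs n p"
proof -
  define N where "N = 2*n"
  have rng: "\<And>j. j \<in> {1..N} \<Longrightarrow> p j \<in> {1..N}" using permutes_in_image[OF pm] N_def by simp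
  have "rcps N (pairs n p) = pairs n p \<longleftrightarrow> rev (map (\<lambda>v. N + 1 - v) (map p [1..<N+1])) = map p [1..<N+1]"
    using vals_inj[of "rcps N (pairs n p)" "pairs n p"] vals_rcps[of N "pairs n p"] vals_pairs[of n p] N_def
    by auto
  also have "\<dots> \<longleftrightarrow> (\<forall>i<N. N + 1 - p (N - i) = p (Suc i))"
  proof -
    have "rev (map (\<lambda>v. N + 1 - v) (map p [1..<N+1])) = map p [1..<N+1] \<longleftrightarrow>
      (\<forall>i<N. rev (map (\<lambda>v. N + 1 - v) (map p [1..<N+1])) ! i = map p [1..<N+1] ! i)"
      by (simp add: list_eq_iff_nth_eq del: upt_Suc)
    moreover have "\<And>i. i < N \<Longrightarrow> rev (map (\<lambda>v. N + 1 - v) (map p [1..<N+1])) ! i = N + 1 - p (N - i)"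
      by (simp add: rev_nth Suc_diff_Suc del: upt_Suc)
    moreover have "\<And>i. i < N \<Longrightarrow> map p [1..<N+1] ! i = p (Suc i)" by (simp del: upt_Suc)
    ultimately show ?thesis by auto
  qed
  also have "\<dots> \<longleftrightarrow> rc_invariant N p"
    unfolding rc_invariant_def
  proof
    assume a: "\<forall>i<N. N + 1 - p (N - i) = p (Suc i)"
    show "\<forall>i\<in>{1..N}. p (N + 1 - i) = N + 1 - p i"
    proof
      fix j assume j: "j \<in> {1..N}"
      have "j - 1 < N" using j by auto
      then have "N + 1 - p (N - (j - 1)) = p (Suc (j - 1))" by (rule a[rule_format])
      moreover have "N - (j - 1) = N + 1 - j" "Suc (j - 1) = j" using j by auto
      moreover have "N + 1 - j \<in> {1..N}" using j by auto
      then have "p (N + 1 - j) \<in> {1..N}" by (rule rng)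
      ultimately show "p (N + 1 - j) = N + 1 - p j" by auto
    qed
  next
    assume a: "\<forall>i\<in>{1..N}. p (N + 1 - i) = N + 1 - p i"
    show "\<forall>i<N. N + 1 - p (N - i) = p (Suc i)"
    proof (intro allI impI)
      fix i assume i: "i < N"
      have si: "Suc i \<in> {1..N}" using i by auto
      then have "p (N + 1 - Suc i) = N + 1 - p (Suc i)" using a by blast
      moreover have "p (Suc i) \<in> {1..N}" using rng si by blast
      moreover have "N + 1 - Suc i = N - i" by simp
      ultimately show "N + 1 - p (N - i) = p (Suc i)" by auto
    qed
  qed
  finally show ?thesis using N_def by simp
qed



lemma fz_link:
  assumes pm: "p permutes {1..2*n}" and al: "alternating (2*n) p" and t: "t \<in> {1..2*n}"
  shows "fz_step (2*n) p t = (if t \<in> snd ` set (pairs n p) then U else D)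
       \<and> fz_weight (2*n) p t = wgt (pairs n p) t"
proof -
  define N where "N = 2*n"
  define j where "j = inv_into {1..N} p t"
  define ps where "ps = pairs n p"
  have tim: "t \<in> p ` {1..N}" using permutes_image[OF pm] t N_def by simp
  have jr: "j \<in> {1..N}" using inv_into_into[OF tim] j_def by simp
  have pj: "p j = t" using f_inv_into_f[OF tim] j_def by simp
  have inj: "inj_on p {1..N}" using permutes_inj_on[OF pm] .
  have rng: "\<And>x. x \<in> {1..N} \<Longrightarrow> p x \<in> {1..N}" using permutes_in_image[OF pm] N_def by simp
  have altodd: "\<And>i. i \<in> {1..<N} \<Longrightarrow> odd i \<Longrightarrow> p (Suc i) < p i"
    using al unfolding alternating_def N_def by blast
  have alteven: "\<And>i. i \<in> {1..<N} \<Longrightarrow> even i \<Longrightarrow> p i < p (Suc i)"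
    using al unfolding alternating_def N_def by blast
  have peq: "\<And>x. x \<in> {1..N} \<Longrightarrow> p x = t \<Longrightarrow> x = j"
    using inj jr pj by (metis inj_onD)
  have mem: "t \<in> snd ` set ps \<longleftrightarrow> even j"
  proof
    assume "t \<in> snd ` set ps"
    then obtain m where m: "m < n" "t = p (2*m+2)" by (auto simp: ps_def pairs_def)
    then have "2*m+2 = j" using peq[of "2*m+2"] N_def by auto
    then show "even j" by auto
  next
    assume e: "even j"
    define m where "m = j div 2 - 1"
    have jm: "j = 2*m+2" using e jr unfolding m_def by auto
    then have "m < n" using jr N_def by auto
    then have "ps ! m \<in> set ps" unfolding ps_def using nth_mem[of m "pairs n p"] by simp
    moreover have "snd (ps ! m) = t" using jm pj \<open>m < n\<close> by (simp add: ps_def nth_pairs)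
    ultimately show "t \<in> snd ` set ps" by force
  qed
  have ext_in: "\<And>x. x \<in> {1..N} \<Longrightarrow> ext N p x = p x" by (auto simp: ext_def)
  have step: "fz_step N p t = (if t \<in> snd ` set ps then U else D)"
  proof (cases "even j")
    case True
    have j2: "j \<ge> 2" using True jr by (cases "j = 1") auto
    have a: "ext N p (j - 1) = p (j - 1)" using j2 jr by (intro ext_in) auto
    have "j - 1 \<in> {1..<N}" "odd (j - 1)" using j2 jr True by auto
    then have "p (Suc (j - 1)) < p (j - 1)" by (rule altodd)
    then have ab: "p j < p (j - 1)" using j2 by simp
    have bc: "p j < ext N p (j + 1)"
    proof (cases "j = N")
      case True
      then show ?thesis using rng[OF jr] by (simp add: ext_def)
    next
      case False
      then have "ext N p (j + 1) = p (Suc j)" using jr by (simp add: ext_def)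
      moreover have "j \<in> {1..<N}" using jr False by auto
      ultimately show ?thesis using alteven[of j] True by auto
    qed
    show ?thesis unfolding fz_step_def Let_def j_def[symmetric] using a ab bc ext_in[OF jr] True mem by auto
  next
    case False
    have jN: "j < N" using False jr N_def by (cases "j = N") auto
    have ab: "ext N p (j - 1) < p j"
    proof (cases "j = 1")
      case True
      then show ?thesis using rng[OF jr] by (simp add: ext_def)
    next
      case False
      then have "j - 1 \<in> {1..<N}" "even (j - 1)" using jr \<open>odd j\<close> by auto
      then have "p (j - 1) < p (Suc (j - 1))" using alteven by blast
      moreover have "ext N p (j - 1) = p (j - 1)" using False jr by (intro ext_in) auto
      ultimately show ?thesis using False jr by (cases j) auto
    qed
    have c: "ext N p (j + 1) = p (Suc j)" using jN by (simp add: ext_def)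
    have "j \<in> {1..<N}" using jN jr by auto
    then have bc: "p (Suc j) < p j" using altodd[of j] False by auto
    show ?thesis unfolding fz_step_def Let_def j_def[symmetric] using ab bc c ext_in[OF jr] False mem by auto
  qed
  define m0 where "m0 = (j - 1) div 2"
  have m0n: "m0 < n" using jr N_def m0_def by auto
  have tw: "takeWhile (\<lambda>(a,b). a \<noteq> t \<and> b \<noteq> t) ps = take m0 ps"
  proof (rule takeWhile_eq_take_P_nth)
    fix i assume i: "i < m0" "i < length ps"
    have r: "2*i+1 \<in> {1..N}" "2*i+2 \<in> {1..N}" "2*i+1 \<noteq> j" "2*i+2 \<noteq> j" using i m0_def jr N_def by auto
    then have "p (2*i+1) \<noteq> t" "p (2*i+2) \<noteq> t" using peq by blast+
    then show "(\<lambda>(a,b). a \<noteq> t \<and> b \<noteq> t) (ps ! i)" using i by (simp add: ps_def nth_pairs)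
  next
    assume "m0 < length ps"
    have "j = 2*m0+1 \<or> j = 2*m0+2" using jr m0_def by auto
    then show "\<not> (\<lambda>(a,b). a \<noteq> t \<and> b \<noteq> t) (ps ! m0)" using m0n pj by (auto simp: ps_def nth_pairs)
  qed
  define Q where "Q = (\<lambda>i. p (2*i+2) < t \<and> t < p (2*i+1))"
  have w1: "wgt ps t = card {i. i < m0 \<and> Q i}"
  proof -
    have "wgt ps t = length (filter (\<lambda>(a,b). b < t \<and> t < a) (take m0 ps))"
      unfolding wgt_def cnt_def tw ..
    also have "\<dots> = card {i. i < length (take m0 ps) \<and> (\<lambda>(a,b). b < t \<and> t < a) (take m0 ps ! i)}"
      by (rule length_filter_conv_card)
    also have "{i. i < length (take m0 ps) \<and> (\<lambda>(a,b). b < t \<and> t < a) (take m0 ps ! i)} = {i. i < m0 \<and> Q i}"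
      using m0n by (auto simp: ps_def nth_pairs Q_def)
    finally show ?thesis .
  qed
  have seteq: "{k \<in> {1..<j}. ext N p k < t \<and> t < ext N p (k - 1)} = (\<lambda>i. 2*i+2) ` {i. i < m0 \<and> Q i}"
  proof
    show "{k \<in> {1..<j}. ext N p k < t \<and> t < ext N p (k - 1)} \<subseteq> (\<lambda>i. 2*i+2) ` {i. i < m0 \<and> Q i}"
    proof
      fix k assume k: "k \<in> {k \<in> {1..<j}. ext N p k < t \<and> t < ext N p (k - 1)}"
      have kr: "k \<in> {1..N}" "k < j" using k jr by auto
      have ek: "ext N p k = p k" using ext_in[OF kr(1)] .
      have "k \<noteq> 1" using k by (auto simp: ext_def)
      then have k2: "k \<ge> 2" using kr by auto
      have ek1: "ext N p (k - 1) = p (k - 1)" using k2 kr by (intro ext_in) auto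
      have ev: "even k"
      proof (rule ccontr)
        assume "odd k"
        then have "k - 1 \<in> {1..<N}" "even (k - 1)" using k2 kr by auto
        then have "p (k - 1) < p (Suc (k - 1))" using alteven by blast
        then have "p (k - 1) < p k" using k2 by simp
        then show False using k ek ek1 by auto
      qed
      define i where "i = k div 2 - 1"
      have ki: "k = 2*i+2" using ev k2 unfolding i_def by auto
      have "i < m0" using ki kr m0_def by auto
      moreover have "Q i" using k ek ek1 ki unfolding Q_def by auto
      ultimately show "k \<in> (\<lambda>i. 2*i+2) ` {i. i < m0 \<and> Q i}" using ki by blast
    qed
  next
    show "(\<lambda>i. 2*i+2) ` {i. i < m0 \<and> Q i} \<subseteq> {k \<in> {1..<j}. ext N p k < t \<and> t < ext N p (k - 1)}"
    proof
      fix k assume "k \<in> (\<lambda>i. 2*i+2) ` {i. i < m0 \<and> Q i}"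
      then obtain i where i: "i < m0" "Q i" "k = 2*i+2" by auto
      have kr: "k \<in> {1..N}" "k < j" using i m0_def jr by auto
      have "ext N p k = p k" using ext_in[OF kr(1)] .
      moreover have "ext N p (k - 1) = p (2*i+1)" using i kr by (subst ext_in) auto
      ultimately show "k \<in> {k \<in> {1..<j}. ext N p k < t \<and> t < ext N p (k - 1)}"
        using i kr unfolding Q_def by auto
    qed
  qed
  have "fz_weight N p t = card {k \<in> {1..<j}. ext N p k < t \<and> t < ext N p (k - 1)}"
    unfolding fz_weight_def Let_def j_def ..
  also have "\<dots> = card {i. i < m0 \<and> Q i}" unfolding seteq
    by (rule card_image) (auto simp: inj_on_def)
  finally have "fz_weight N p t = wgt ps t" using w1 by simp
  then show ?thesis using step N_def ps_def by simp
qed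

lemma PsiFZ_pairs:
  assumes "p permutes {1..2*n}" "alternating (2*n) p"
  shows "PsiFZ (2*n) p = FZP (2*n) (pairs n p)"
proof -
  have "\<forall>t\<in>set [1..<2*n+1]. fz_step (2*n) p t = (if t \<in> snd ` set (pairs n p) then U else D)
       \<and> fz_weight (2*n) p t = wgt (pairs n p) t"
    using fz_link[OF assms] by (simp del: upt_Suc)
  then show ?thesis unfolding PsiFZ_def FZP_def by (simp del: upt_Suc)
qed



definition cU :: "step list \<Rightarrow> nat" where "cU xs = length (filter (\<lambda>s. s = U) xs)"
definition cD :: "step list \<Rightarrow> nat" where "cD xs = length (filter (\<lambda>s. s = D) xs)"

lemma height_c: "height M i = int (cU (take (i - 1) M)) - int (cD (take (i - 1) M))"
  by (simp add: height_def cU_def cD_def)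

lemma flip_flip[simp]: "flip (flip x) = x" by (cases x) auto
lemma flip_eqU[simp]: "(flip x = U) = (x = D)" by (cases x) auto
lemma flip_eqD[simp]: "(flip x = D) = (x = U)" by (cases x) auto

lemma cU_simps[simp]: "cU (xs @ ys) = cU xs + cU ys" "cU (rev xs) = cU xs" "cU (map flip xs) = cD xs"
  by (auto simp: cU_def cD_def rev_filter[symmetric] filter_map o_def)
lemma cD_simps[simp]: "cD (xs @ ys) = cD xs + cD ys" "cD (rev xs) = cD xs" "cD (map flip xs) = cU xs"
  by (auto simp: cU_def cD_def rev_filter[symmetric] filter_map o_def)

lemma height_take: "i \<le> Suc n \<Longrightarrow> height (take n M) i = height M i"
  by (simp add: height_def min_def)

definition G :: "step list \<times> nat list \<Rightarrow> nat \<Rightarrow> nat" where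
  "G Hx i = (if fst Hx ! (i - 1) \<in> {U, H} then nat (height (fst Hx) i - int (snd Hx ! (i - 1)))
             else nat (height (fst Hx) i - 1 - int (snd Hx ! (i - 1))))"

lemma rc_eq: "rc Hx = (rev (map flip (fst Hx)), rev (map (G Hx) [1..<length (fst Hx) + 1]))"
  unfolding rc_def Let_def G_def by simp

lemma rc_fix_nth:
  assumes "length (fst Hx) = N" "length (snd Hx) = N" "rc Hx = Hx" "q < N"
  shows "fst Hx ! q = flip (fst Hx ! (N - 1 - q)) \<and> snd Hx ! q = G Hx (N - q)"
proof -
  have e1: "fst Hx = rev (map flip (fst Hx))" and e2: "snd Hx = rev (map (G Hx) [1..<N + 1])"
    using assms(3) rc_eq[of Hx] assms(1) by (metis fst_conv snd_conv)+
  have "fst Hx ! q = rev (map flip (fst Hx)) ! q" using e1 by simp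
  also have "\<dots> = flip (fst Hx ! (N - 1 - q))" using assms(1,4) by (simp add: rev_nth)
  finally have a: "fst Hx ! q = flip (fst Hx ! (N - 1 - q))" .
  have "snd Hx ! q = rev (map (G Hx) [1..<N + 1]) ! q" using e2 by simp
  also have "\<dots> = G Hx (N - q)" using assms(4) by (simp add: rev_nth Suc_diff_Suc del: upt_Suc)
  finally show ?thesis using a by simp
qed

lemma rc_det:
  assumes l: "length (fst H1) = 2*n" "length (snd H1) = 2*n" "length (fst H2) = 2*n" "length (snd H2) = 2*n"
    and r: "rc H1 = H1" "rc H2 = H2"
    and tk: "take n (fst H1) = take n (fst H2)" "take n (snd H1) = take n (snd H2)"
  shows "H1 = H2"
proof -
  have lt: "\<And>q xs ys. take n xs = take n ys \<Longrightarrow> q < n \<Longrightarrow> xs ! q = ys ! q"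
    by (metis nth_take)
  have M: "fst H1 = fst H2"
  proof (rule nth_equalityI)
    show "length (fst H1) = length (fst H2)" using l by simp
  next
    fix q assume "q < length (fst H1)"
    then have q: "q < 2*n" using l by simp
    show "fst H1 ! q = fst H2 ! q"
    proof (cases "q < n")
      case True then show ?thesis using lt[OF tk(1)] by simp
    next
      case False
      have "fst H1 ! q = flip (fst H1 ! (2*n - 1 - q))" using rc_fix_nth[OF l(1,2) r(1) q] by simp
      moreover have "fst H2 ! q = flip (fst H2 ! (2*n - 1 - q))" using rc_fix_nth[OF l(3,4) r(2) q] by simp
      moreover have "fst H1 ! (2*n - 1 - q) = fst H2 ! (2*n - 1 - q)" using lt[OF tk(1)] False q by simp
      ultimately show ?thesis by simp
    qed
  qed
  have W: "snd H1 = snd H2"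
  proof (rule nth_equalityI)
    show "length (snd H1) = length (snd H2)" using l by simp
  next
    fix q assume "q < length (snd H1)"
    then have q: "q < 2*n" using l by simp
    show "snd H1 ! q = snd H2 ! q"
    proof (cases "q < n")
      case True then show ?thesis using lt[OF tk(2)] by simp
    next
      case False
      have "snd H1 ! q = G H1 (2*n - q)" using rc_fix_nth[OF l(1,2) r(1) q] by simp
      moreover have "snd H2 ! q = G H2 (2*n - q)" using rc_fix_nth[OF l(3,4) r(2) q] by simp
      moreover have "snd H1 ! (2*n - q - 1) = snd H2 ! (2*n - q - 1)" using lt[OF tk(2)] False q by simp
      ultimately show ?thesis using M unfolding G_def by simp
    qed
  qed
  show ?thesis using M W by (metis prod.collapse)
qed

lemma Psi_LBP:
  assumes g: "good (2*n) ps"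
  shows "(take n (fst (FZP (2*n) ps)), take n (snd (FZP (2*n) ps))) \<in> LBP n"
proof -
  define M where "M = fst (FZP (2*n) ps)"
  define W where "W = snd (FZP (2*n) ps)"
  have v: "valid (2*n) (FZP (2*n) ps)" using FZP_valid[OF g] .
  have lM: "length M = 2*n" "length W = 2*n" by (auto simp: M_def W_def)
  have sM: "set M \<subseteq> {U, D}" using v unfolding valid_def M_def by simp
  have bal: "ballot_path (take n M)"
    unfolding ballot_path_def
  proof
    show "set (take n M) \<subseteq> {U, D}" using sM set_take_subset by fastforce
    show "\<forall>i\<in>{1..length (take n M) + 1}. 0 \<le> height (take n M) i"
    proof
      fix i assume "i \<in> {1..length (take n M) + 1}"
      then have i: "1 \<le> i" "i \<le> Suc n" using lM by auto
      have "height (take n M) i = height M i" using height_take[OF i(2)] .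
      also have "\<dots> = int (nn (shape i ps))" using height_FZP[OF g i(1)] i unfolding M_def by simp
      finally show "0 \<le> height (take n M) i" by simp
    qed
  qed
  have bnd: "\<forall>i\<in>{1..n}. (take n M ! (i - 1) = U \<longrightarrow> int (take n W ! (i - 1)) \<le> height (take n M) i) \<and>
                  (take n M ! (i - 1) = D \<longrightarrow> int (take n W ! (i - 1)) \<le> height (take n M) i - 1)"
  proof
    fix i assume i: "i \<in> {1..n}"
    have e: "take n M ! (i - 1) = M ! (i - 1)" "take n W ! (i - 1) = W ! (i - 1)"
      "height (take n M) i = height M i" using i height_take[of i n M] by auto
    have i2: "i \<in> {1..2*n}" using i by auto
    have vb: "\<forall>i\<in>{1..2*n}. (M ! (i - 1) = U \<longrightarrow> int (W ! (i - 1)) \<le> height M i) \<and>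
                  (M ! (i - 1) = D \<longrightarrow> int (W ! (i - 1)) \<le> height M i - 1)"
      using v unfolding valid_def M_def W_def by simp
    show "(take n M ! (i - 1) = U \<longrightarrow> int (take n W ! (i - 1)) \<le> height (take n M) i) \<and>
                  (take n M ! (i - 1) = D \<longrightarrow> int (take n W ! (i - 1)) \<le> height (take n M) i - 1)"
      unfolding e using vb i2 by blast
  qed
  show ?thesis unfolding LBP_def M_def[symmetric] W_def[symmetric] using lM bal bnd by auto
qed



definition gg :: "step list \<Rightarrow> nat list \<Rightarrow> nat \<Rightarrow> nat" where
  "gg P w i = (if P ! (i - 1) = U then nat (height P i - int (w ! (i - 1)))
               else nat (height P i - 1 - int (w ! (i - 1))))"

lemma ext_hist:
  assumes lbp: "(P, w) \<in> LBP n"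
  defines "M \<equiv> P @ rev (map flip P)" and "W \<equiv> w @ rev (map (gg P w) [1..<n+1])"
  shows "valid (2*n) (M, W) \<and> rc (M, W) = (M, W) \<and> take n M = P \<and> take n W = w"
proof -
  have lP: "length P = n" and lw: "length w = n" and sP: "set P \<subseteq> {U, D}"
    and lb: "\<forall>i\<in>{1..n}. (P ! (i - 1) = U \<longrightarrow> int (w ! (i - 1)) \<le> height P i) \<and>
                  (P ! (i - 1) = D \<longrightarrow> int (w ! (i - 1)) \<le> height P i - 1)"
    using lbp unfolding LBP_def ballot_path_def by auto
  have lM: "length M = 2*n" "length W = 2*n" using lP lw by (auto simp: M_def W_def)
  have h1: "height M i = height P i" if "i \<le> Suc n" for i
  proof -
    have "take (i - 1) M = take (i - 1) P" using that lP by (simp add: M_def)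
    then show ?thesis by (simp add: height_def)
  qed
  have h2: "height M (2*n + 1 - k) = height P (Suc k)" if "k \<le> n" for k
  proof -
    have "take (2*n - k) M = P @ take (n - k) (rev (map flip P))" using that lP by (simp add: M_def)
    also have "take (n - k) (rev (map flip P)) = rev (map flip (drop k P))"
      using that lP by (simp add: take_rev drop_map)
    finally have e: "take (2*n + 1 - k - 1) M = P @ rev (map flip (drop k P))" by simp
    have "P = take k P @ drop k P" by simp
    then have c: "cU P = cU (take k P) + cU (drop k P)" "cD P = cD (take k P) + cD (drop k P)"
      by (metis cU_simps(1)) (metis cD_simps(1) \<open>P = take k P @ drop k P\<close>)
    show ?thesis unfolding height_c e using c by simp
  qed
  have PUD: "P ! (k - 1) = U \<or> P ! (k - 1) = D" if "k \<in> {1..n}" for k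
  proof -
    have "k - 1 < length P" using that lP by auto
    then have "P ! (k - 1) \<in> set P" by (rule nth_mem)
    then show ?thesis using sP by auto
  qed
  have hP: "height P (Suc k) = height P k + (if P ! (k - 1) = U then 1 else -1)" if "k \<in> {1..n}" for k
  proof -
    show ?thesis using height_Suc[of k P] that lP PUD[OF that] by auto
  qed
  have Mk: "M ! (2*n - k) = flip (P ! (k - 1))" if "k \<in> {1..n}" for k
  proof -
    have a: "\<not> 2*n - k < n" "2*n - k - n = n - k" using that by auto
    have "M ! (2*n - k) = rev (map flip P) ! (n - k)" using a lP unfolding M_def nth_append by simp
    also have "\<dots> = flip (P ! (k - 1))"
    proof -
      have "k - 1 < length P" "length P - Suc (n - k) = k - 1" using that lP by auto
      then show ?thesis using that lP by (simp add: rev_nth)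
    qed
    finally show ?thesis .
  qed
  have Wk: "W ! (2*n - k) = gg P w k" if "k \<in> {1..n}" for k
  proof -
    have a: "\<not> 2*n - k < n" "2*n - k - n = n - k" using that by auto
    have "W ! (2*n - k) = rev (map (gg P w) [1..<n+1]) ! (n - k)" using a lw unfolding W_def nth_append by simp
    also have "\<dots> = gg P w k"
    proof -
      have "k - 1 < n" "n - Suc (n - k) = k - 1" "Suc (k - 1) = k" using that by auto
      then show ?thesis by (simp add: rev_nth del: upt_Suc)
    qed
    finally show ?thesis .
  qed
  have Mi: "M ! (i - 1) = P ! (i - 1)" "W ! (i - 1) = w ! (i - 1)" if "i \<in> {1..n}" for i
    using that lP lw by (auto simp: M_def W_def nth_append)
  have ggval: "int (gg P w k) = (if P ! (k - 1) = U then height P k - int (w ! (k - 1)) else height P k - 1 - int (w ! (k - 1)))"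
    if "k \<in> {1..n}" for k
  proof -
    have "(P ! (k - 1) = U \<longrightarrow> int (w ! (k - 1)) \<le> height P k) \<and>
                  (P ! (k - 1) = D \<longrightarrow> int (w ! (k - 1)) \<le> height P k - 1)" using lb that by blast
    then show ?thesis using PUD[OF that] unfolding gg_def by auto
  qed
  have valid: "valid (2*n) (M, W)"
    unfolding valid_def fst_conv snd_conv
  proof (intro conjI)
    show "length M = 2*n" "length W = 2*n" using lM by auto
    show "set M \<subseteq> {U, D}" using sP by (auto simp: M_def)
    show "height M (Suc (2*n)) = 0" using h2[of 0] by simp
    show "\<forall>i\<in>{1..2*n}. (M ! (i - 1) = U \<longrightarrow> int (W ! (i - 1)) \<le> height M i) \<and>
                  (M ! (i - 1) = D \<longrightarrow> int (W ! (i - 1)) \<le> height M i - 1)"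
    proof
      fix i assume i: "i \<in> {1..2*n}"
      show "(M ! (i - 1) = U \<longrightarrow> int (W ! (i - 1)) \<le> height M i) \<and>
                  (M ! (i - 1) = D \<longrightarrow> int (W ! (i - 1)) \<le> height M i - 1)"
      proof (cases "i \<le> n")
        case True
        then have "i \<in> {1..n}" using i by auto
        then show ?thesis using Mi h1[of i] lb True by auto
      next
        case False
        define k where "k = 2*n + 1 - i"
        have k: "k \<in> {1..n}" using False i k_def by auto
        have ik: "i - 1 = 2*n - k" "i = 2*n + 1 - k" using False i k_def by auto
        have hh: "height M i = height P k + (if P ! (k - 1) = U then 1 else -1)"
          using h2[of k] hP[OF k] k ik by simp
        show ?thesis unfolding ik(1) using Mk[OF k] Wk[OF k] hh ggval[OF k] by auto
      qed
    qed
  qed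
  have rcf: "rc (M, W) = (M, W)"
  proof -
    have A: "rev (map flip M) = M" by (simp add: M_def rev_map o_def)
    have B: "rev (map (G (M, W)) [1..<2*n + 1]) = W"
    proof (rule nth_equalityI)
      show "length (rev (map (G (M, W)) [1..<2*n + 1])) = length W" using lM by (simp del: upt_Suc)
    next
      fix q assume "q < length (rev (map (G (M, W)) [1..<2*n + 1]))"
      then have q: "q < 2*n" by (simp del: upt_Suc)
      have e: "rev (map (G (M, W)) [1..<2*n + 1]) ! q = G (M, W) (2*n - q)"
        using q by (simp add: rev_nth Suc_diff_Suc del: upt_Suc)
      show "rev (map (G (M, W)) [1..<2*n + 1]) ! q = W ! q"
      proof (cases "q < n")
        case True
        define k where "k = Suc q"
        have k: "k \<in> {1..n}" using True k_def by auto
        have ik: "2*n - q - 1 = 2*n - k" "2*n - q = 2*n + 1 - k" using True k_def by auto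
        have hh: "height M (2*n - q) = height P k + (if P ! (k - 1) = U then 1 else -1)"
          using h2[of k] hP[OF k] k ik by simp
        have wq: "W ! q = w ! (k - 1)" using True lw k_def by (simp add: W_def nth_append)
        show ?thesis unfolding e G_def fst_conv snd_conv ik(1) using Mk[OF k] Wk[OF k] hh ggval[OF k] wq PUD[OF k]
          by (cases "P ! (k - 1) = U") auto
      next
        case False
        define i where "i = 2*n - q"
        have i: "i \<in> {1..n}" using False q i_def by auto
        have wq: "W ! q = gg P w i" using Wk[OF i] i_def q by simp
        have "P ! (i - 1) = U \<or> P ! (i - 1) = D" using PUD[OF i] .
        then show ?thesis unfolding e i_def[symmetric] G_def fst_conv snd_conv
          using Mi[OF i] h1[of i] i wq unfolding gg_def by auto
      qed
    qed
    show ?thesis unfolding rc_eq fst_conv snd_conv lM(1) using A B by simp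
  qed
  have "take n M = P" "take n W = w" using lP lw by (auto simp: M_def W_def)
  then show ?thesis using valid rcf by simp
qed



theorem mainTheorem5:
  fixes n :: nat
  assumes "n \<ge> 1"
  shows "(\<forall>p\<in>RcAlt n.
            set (fst (PsiFZ (2*n) p)) \<subseteq> {U, D}
          \<and> rc (PsiFZ (2*n) p) = PsiFZ (2*n) p
          \<and> Psi n p \<in> LBP n)
       \<and> bij_betw (Psi n) (RcAlt n) (LBP n)"
proof -
  have F: "good (2*n) (pairs n p) \<and> PsiFZ (2*n) p = FZP (2*n) (pairs n p)
      \<and> rcps (2*n) (pairs n p) = pairs n p \<and> p permutes {1..2*n}" if "p \<in> RcAlt n" for p
  proof -
    have pm: "p permutes {1..2*n}" and al: "alternating (2*n) p" and ri: "rc_invariant (2*n) p"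
      using that unfolding RcAlt_def by auto
    show ?thesis using good_pairs[OF pm al] PsiFZ_pairs[OF pm al] rcinv_iff[OF pm] ri pm by simp
  qed
  have PsiE: "Psi n p = (take n (fst (FZP (2*n) (pairs n p))), take n (snd (FZP (2*n) (pairs n p))))"
    if "p \<in> RcAlt n" for p
    using F[OF that] unfolding Psi_def by simp
  have A: "\<forall>p\<in>RcAlt n. set (fst (PsiFZ (2*n) p)) \<subseteq> {U, D}
          \<and> rc (PsiFZ (2*n) p) = PsiFZ (2*n) p \<and> Psi n p \<in> LBP n"
  proof
    fix p assume p: "p \<in> RcAlt n"
    note f = F[OF p]
    have "set (fst (PsiFZ (2*n) p)) \<subseteq> {U, D}" using FZP_valid[of "2*n" "pairs n p"] f unfolding valid_def by simp
    moreover have "rc (PsiFZ (2*n) p) = PsiFZ (2*n) p" using rc_FZP[of "2*n" "pairs n p"] f by simp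
    moreover have "Psi n p \<in> LBP n" using PsiE[OF p] Psi_LBP[of n "pairs n p"] f by simp
    ultimately show "set (fst (PsiFZ (2*n) p)) \<subseteq> {U, D}
          \<and> rc (PsiFZ (2*n) p) = PsiFZ (2*n) p \<and> Psi n p \<in> LBP n" by blast
  qed
  have inj: "inj_on (Psi n) (RcAlt n)"
  proof (rule inj_onI)
    fix p q assume p: "p \<in> RcAlt n" and q: "q \<in> RcAlt n" and e: "Psi n p = Psi n q"
    note fp = F[OF p] and fq = F[OF q]
    have rp: "rc (FZP (2*n) (pairs n p)) = FZP (2*n) (pairs n p)" using rc_FZP[of "2*n" "pairs n p"] fp by simp
    have rq: "rc (FZP (2*n) (pairs n q)) = FZP (2*n) (pairs n q)" using rc_FZP[of "2*n" "pairs n q"] fq by simp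
    have "FZP (2*n) (pairs n p) = FZP (2*n) (pairs n q)"
      by (rule rc_det[OF _ _ _ _ rp rq]) (use e PsiE[OF p] PsiE[OF q] in auto)
    then have "pairs n p = pairs n q" using FZP_inj fp fq by blast
    then show "p = q" using perm_from_pairs fp fq by blast
  qed
  have img: "Psi n ` RcAlt n = LBP n"
  proof
    show "Psi n ` RcAlt n \<subseteq> LBP n" using A by auto
    show "LBP n \<subseteq> Psi n ` RcAlt n"
    proof
      fix x assume x: "x \<in> LBP n"
      obtain P w where xe: "x = (P, w)" by force
      define M where "M = P @ rev (map flip P)"
      define W where "W = w @ rev (map (gg P w) [1..<n+1])"
      have hx: "valid (2*n) (M, W) \<and> rc (M, W) = (M, W) \<and> take n M = P \<and> take n W = w"
        using ext_hist[of P w n] x xe unfolding M_def W_def by simp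
      obtain ps where ps: "good (2*n) ps" "FZP (2*n) ps = (M, W)" using surj_FZP hx by blast
      have g2: "good (2*n) (rcps (2*n) ps)" using good_rcps[OF ps(1)] .
      have "FZP (2*n) (rcps (2*n) ps) = FZP (2*n) ps" using rc_FZP[OF ps(1)] ps(2) hx by simp
      then have rcf: "rcps (2*n) ps = ps" using FZP_inj[OF g2 ps(1)] by simp
      define p where "p = mk n ps"
      have pm: "p permutes {1..2*n}" and pp: "pairs n p = ps" and al: "alternating (2*n) p"
        using mk_props[OF ps(1)] p_def by auto
      have "rc_invariant (2*n) p" using rcinv_iff[OF pm] pp rcf by simp
      then have pin: "p \<in> RcAlt n" using pm al unfolding RcAlt_def by simp
      have "Psi n p = (take n M, take n W)" using PsiE[OF pin] pp ps(2) by simp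
      then have "Psi n p = x" using hx xe by simp
      then show "x \<in> Psi n ` RcAlt n" using pin by blast
    qed
  qed
  show ?thesis using A inj img unfolding bij_betw_def by blast
qed

end
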